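(* Let $M\ge 0$ be an integer, let $a_0,\dots,a_M\in\mathbb{R}$ and let $f_M(x)=\sum_{m=0}^M a_m T_m(x)$, where $T_m(x)=\cos(m\arccos x)$ is the $m$-th Chebyshev polynomial. For each integer $n\ge 0$ and $y\in[-1,1]$ define $$\tilde R_n(y)=\int_{-1}^{y} f_M(y-1-t)\,T_n(t)\,\mathrm{d}t ,$$ i.e. $\tilde R_n(y)$ is the convolution $\int_{-1}^{x+1}f_M(x-t)T_n(t)\,\mathrm{d}t$ evaluated at $x=y-1\in[-2,0]$. Then for all $y\in[-1,1]$: $$\tilde R_0(y)=\int_{-1}^{y} f_M(t)\,\mathrm{d}t,$$ $$\tilde R_1(y)=\int_{-1}^{y}\tilde R_0(s)\,\mathrm{d}s-\tilde R_0(y),$$ $$\tilde R_2(y)=4\int_{-1}^{y}\tilde R_1(s)\,\mathrm{d}s+\tilde R_0(y),$$ and for every $n\ge 2$, $$\tilde R_{n+1}(y)=2(n+1)\int_{-1}^{y}\tilde R_n(s)\,\mathrm{d}s+\frac{n+1}{n-1}\tilde R_{n-1}(y)+\frac{2(-1)^n}{n-1}\int_{-1}^{y} f_M(t)\,\mathrm{d}t.$$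
   Context: $T_m$ denotes the Chebyshev polynomial of the first kind of degree $m$ on $[-1,1]$. The function $\tilde R_n$ is the (left-sided, Volterra-type) convolution of $f_M$ and $T_n$, shifted from $x\in[-2,0]$ to $y=x+1\in[-1,1]$. *)

theory Defs
  imports "HOL-Analysis.Analysis"
begin

text \<open>Chebyshev polynomials of the first kind, as polynomial functions on all of the reals
  (three-term recurrence); on [-1,1] they agree with cos (m * arccos x).\<close>
fun cheb_T :: "nat \<Rightarrow> real \<Rightarrow> real" where
  "cheb_T 0 x = 1"
| "cheb_T (Suc 0) x = x"
| "cheb_T (Suc (Suc n)) x = 2 * x * cheb_T (Suc n) x - cheb_T n x"

definition fM :: "nat \<Rightarrow> (nat \<Rightarrow> real) \<Rightarrow> real \<Rightarrow> real" where
  "fM M a x = (\<Sum>m=0..M. a m * cheb_T m x)"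

definition Rt :: "nat \<Rightarrow> (nat \<Rightarrow> real) \<Rightarrow> nat \<Rightarrow> real \<Rightarrow> real" where
  "Rt M a n y = integral {-1..y} (\<lambda>t. fM M a (y - 1 - t) * cheb_T n t)"

end

theory Submission
  imports Defs
begin


lemma var_leibniz:
  fixes K Kx :: "real \<Rightarrow> real \<Rightarrow> real"
  assumes d: "\<And>x t. x \<in> {-1..1} \<Longrightarrow> t \<in> {-1..1} \<Longrightarrow> ((\<lambda>x. K x t) has_real_derivative Kx x t) (at x within {-1..1})"
  and cKx: "continuous_on ({-1..1} \<times> {-1..1}) (\<lambda>(x,t). Kx x t)"
  and cK: "continuous_on ({-1..1} \<times> {-1..1}) (\<lambda>(x,t). K x t)"
  and y: "y \<in> {-1..1}"
  shows "((\<lambda>y. integral {-1..y} (K y)) has_real_derivative (integral {-1..y} (Kx y) + K y y)) (at y within {-1..1})"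
proof -
  let ?I = "{-1..1::real}"
  have sub: "{-1..y} \<subseteq> ?I" using y by auto
  have cKx': "continuous_on (?I \<times> cbox (-1) y) (\<lambda>(x,t). Kx x t)"
    by (rule continuous_on_subset[OF cKx]) (use sub in auto)
  have cK1: "continuous_on ?I (K x)" if "x \<in> ?I" for x
  proof -
    have "continuous_on ?I (\<lambda>t. (\<lambda>(x,t). K x t) (x,t))"
      by (rule continuous_on_compose2[OF cK]) (use that in \<open>auto intro!: continuous_intros\<close>)
    then show ?thesis by simp
  qed
  have fx: "((\<lambda>x. integral (cbox (-1) y) (K x)) has_field_derivative integral (cbox (-1) y) (Kx y)) (at y within ?I)"
  proof (rule leibniz_rule_field_derivative[OF _ _ cKx' y])
    show "\<And>x t. x \<in> ?I \<Longrightarrow> t \<in> cbox (- 1) y \<Longrightarrow> ((\<lambda>x. K x t) has_field_derivative Kx x t) (at x within ?I)"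
      using d sub by auto
    show "\<And>x. x \<in> ?I \<Longrightarrow> K x integrable_on cbox (- 1) y"
      using cK1 sub unfolding cbox_interval by (meson integrable_continuous_interval continuous_on_subset)
  qed auto
  have fx': "((\<lambda>x. integral {-1..y} (K x)) has_derivative (\<lambda>h. integral {-1..y} (Kx y) * h)) (at y within ?I)"
    using fx by (simp add: has_field_derivative_def cbox_interval)
  have fy: "((\<lambda>z. integral {-1..z} (K x)) has_derivative blinfun_apply (blinfun_mult_right (K x z))) (at z within ?I)"
    if "x \<in> ?I" "z \<in> ?I" for x z
    using integral_has_real_derivative[OF cK1[OF that(1)] that(2)]
    by (simp add: has_field_derivative_def)
  have cont: "continuous (at (y,y) within ?I \<times> ?I) (\<lambda>(x,z). blinfun_mult_right (K x z))"
  proof -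
    have "continuous_on (?I \<times> ?I) (\<lambda>(x,z). blinfun_mult_right (K x z))"
      using bounded_linear.continuous_on[OF bounded_linear_blinfun_mult_right cK]
      by (simp add: split_beta)
    then show ?thesis using y by (simp add: continuous_on_eq_continuous_within)
  qed
  have P: "((\<lambda>(x, z). integral {-1..z} (K x)) has_derivative
     (\<lambda>(tx, tz). integral {-1..y} (Kx y) * tx + blinfun_apply (blinfun_mult_right (K y y)) tz)) (at (y, y) within ?I \<times> ?I)"
    by (rule has_derivative_partialsI[OF fx' fy cont y]) auto
  have D: "((\<lambda>s. (s,s)) has_derivative (\<lambda>h. (h,h))) (at y within ?I)"
    by (auto intro!: derivative_eq_intros)
  have P': "((\<lambda>(x, z). integral {-1..z} (K x)) has_derivative
     (\<lambda>(tx, tz). integral {-1..y} (Kx y) * tx + blinfun_apply (blinfun_mult_right (K y y)) tz)) (at (y, y) within (\<lambda>s. (s,s)) ` ?I)"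
    by (rule has_derivative_subset[OF P]) auto
  have "((\<lambda>s. integral {-1..s} (K s)) has_derivative (\<lambda>h. integral {-1..y} (Kx y) * h + K y y * h)) (at y within ?I)"
    using has_derivative_in_compose[OF D P'] by simp
  then show ?thesis
    unfolding has_field_derivative_def
    by (rule has_derivative_eq_rhs) (auto simp: algebra_simps)
qed



fun cheb_U :: "nat \<Rightarrow> real \<Rightarrow> real" where
  "cheb_U 0 x = 1"
| "cheb_U (Suc 0) x = 2 * x"
| "cheb_U (Suc (Suc n)) x = 2 * x * cheb_U (Suc n) x - cheb_U n x"

lemma TU2_aux:
  "cheb_T (Suc (Suc n)) x = x * cheb_U (Suc n) x - cheb_U n x \<and>
   cheb_T (Suc (Suc (Suc n))) x = x * cheb_U (Suc (Suc n)) x - cheb_U (Suc n) x"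
proof (induction n)
  case 0 then show ?case by (simp add: algebra_simps)
next
  case (Suc n)
  have a: "cheb_T (Suc (Suc n)) x = x * cheb_U (Suc n) x - cheb_U n x" using Suc by blast
  have b: "cheb_T (Suc (Suc (Suc n))) x = x * cheb_U (Suc (Suc n)) x - cheb_U (Suc n) x" using Suc by blast
  have c: "cheb_T (Suc (Suc (Suc (Suc n)))) x = 2 * x * cheb_T (Suc (Suc (Suc n))) x - cheb_T (Suc (Suc n)) x"
    by (simp only: cheb_T.simps)
  have u3: "cheb_U (Suc (Suc (Suc n))) x = 2 * x * cheb_U (Suc (Suc n)) x - cheb_U (Suc n) x"
    by (simp only: cheb_U.simps)
  have u2: "cheb_U (Suc (Suc n)) x = 2 * x * cheb_U (Suc n) x - cheb_U n x"
    by (simp only: cheb_U.simps)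
  have "cheb_T (Suc (Suc (Suc (Suc n)))) x = x * cheb_U (Suc (Suc (Suc n))) x - cheb_U (Suc (Suc n)) x"
    unfolding c a b u3 u2 by (simp add: algebra_simps)
  then show ?case using b by blast
qed

lemma TU2: "cheb_T (Suc (Suc n)) x = x * cheb_U (Suc n) x - cheb_U n x"
  using TU2_aux by blast

lemma UT_aux:
  "2 * cheb_T (Suc (Suc n)) x = cheb_U (Suc (Suc n)) x - cheb_U n x \<and>
   2 * cheb_T (Suc (Suc (Suc n))) x = cheb_U (Suc (Suc (Suc n))) x - cheb_U (Suc n) x"
proof (induction n)
  case 0 then show ?case by (simp add: algebra_simps)
next
  case (Suc n)
  have a: "2 * cheb_T (Suc (Suc n)) x = cheb_U (Suc (Suc n)) x - cheb_U n x" using Suc by blast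
  have b: "2 * cheb_T (Suc (Suc (Suc n))) x = cheb_U (Suc (Suc (Suc n))) x - cheb_U (Suc n) x" using Suc by blast
  have c: "cheb_T (Suc (Suc (Suc (Suc n)))) x = 2 * x * cheb_T (Suc (Suc (Suc n))) x - cheb_T (Suc (Suc n)) x"
    by (simp only: cheb_T.simps)
  have u4: "cheb_U (Suc (Suc (Suc (Suc n)))) x = 2 * x * cheb_U (Suc (Suc (Suc n))) x - cheb_U (Suc (Suc n)) x"
    by (simp only: cheb_U.simps)
  have u2: "cheb_U (Suc (Suc n)) x = 2 * x * cheb_U (Suc n) x - cheb_U n x"
    by (simp only: cheb_U.simps)
  have "2 * cheb_T (Suc (Suc (Suc (Suc n)))) x = cheb_U (Suc (Suc (Suc (Suc n)))) x - cheb_U (Suc (Suc n)) x"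
  proof -
    have "2 * cheb_T (Suc (Suc (Suc (Suc n)))) x = 2 * x * (2 * cheb_T (Suc (Suc (Suc n))) x) - 2 * cheb_T (Suc (Suc n)) x"
      unfolding c by (simp add: algebra_simps)
    also have "\<dots> = 2 * x * (cheb_U (Suc (Suc (Suc n))) x - cheb_U (Suc n) x) - (cheb_U (Suc (Suc n)) x - cheb_U n x)"
      unfolding a b ..
    also have "\<dots> = cheb_U (Suc (Suc (Suc (Suc n)))) x - cheb_U (Suc (Suc n)) x"
      unfolding u4 u2 by (simp add: algebra_simps)
    finally show ?thesis .
  qed
  then show ?case using b by blast
qed

lemma UT: "2 * cheb_T (Suc (Suc n)) x = cheb_U (Suc (Suc n)) x - cheb_U n x"
  using UT_aux by blast

lemma T_deriv_aux:
  "(\<forall>x. (cheb_T (Suc n) has_real_derivative real (Suc n) * cheb_U n x) (at x)) \<and>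
   (\<forall>x. (cheb_T (Suc (Suc n)) has_real_derivative real (Suc (Suc n)) * cheb_U (Suc n) x) (at x))"
proof (induction n)
  case 0
  have e1: "cheb_T (Suc 0) = (\<lambda>x. x)" by (rule ext) simp
  have e2: "cheb_T (Suc (Suc 0)) = (\<lambda>x. 2 * x * x - 1)" by (rule ext) simp
  show ?case unfolding e1 e2
    by (auto intro!: derivative_eq_intros simp: algebra_simps)
next
  case (Suc n)
  have e: "cheb_T (Suc (Suc (Suc n))) = (\<lambda>x. 2 * x * cheb_T (Suc (Suc n)) x - cheb_T (Suc n) x)"
    by (rule ext) simp
  have "(cheb_T (Suc (Suc (Suc n))) has_real_derivative real (Suc (Suc (Suc n))) * cheb_U (Suc (Suc n)) x) (at x)" for x
  proof -
    have d1: "(cheb_T (Suc (Suc n)) has_real_derivative real (Suc (Suc n)) * cheb_U (Suc n) x) (at x)"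
      using Suc by blast
    have d2: "(cheb_T (Suc n) has_real_derivative real (Suc n) * cheb_U n x) (at x)"
      using Suc by blast
    have d0: "((\<lambda>x. 2 * x) has_real_derivative 2) (at x)"
      by (auto intro!: derivative_eq_intros)
    have "((\<lambda>x. 2 * x * cheb_T (Suc (Suc n)) x - cheb_T (Suc n) x) has_real_derivative
       2 * cheb_T (Suc (Suc n)) x + real (Suc (Suc n)) * cheb_U (Suc n) x * (2 * x) - real (Suc n) * cheb_U n x) (at x)"
      using DERIV_diff[OF DERIV_mult[OF d0 d1] d2] .
    moreover have "2 * cheb_T (Suc (Suc n)) x + real (Suc (Suc n)) * cheb_U (Suc n) x * (2 * x) - real (Suc n) * cheb_U n x
        = real (Suc (Suc (Suc n))) * cheb_U (Suc (Suc n)) x"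
      by (simp only: TU2 cheb_U.simps) (simp add: algebra_simps)
    ultimately show ?thesis by (subst e) (rule DERIV_cong)
  qed
  then show ?case using Suc by blast
qed

lemma T_deriv: "(cheb_T (Suc n) has_real_derivative real (Suc n) * cheb_U n x) (at x)"
  using T_deriv_aux by blast

lemma T_cont: "continuous_on UNIV (cheb_T n)"
proof (cases n)
  case 0
  have "cheb_T 0 = (\<lambda>x. 1)" by (rule ext) simp
  then show ?thesis using 0 by simp
next
  case (Suc m)
  show ?thesis unfolding Suc
    by (rule continuous_at_imp_continuous_on) (meson DERIV_isCont T_deriv)
qed

lemma T_m1: "x = -1 \<Longrightarrow> cheb_T n x = (-1) ^ n"
  by (induction n x rule: cheb_T.induct) auto

lemma fM_cont: "continuous_on UNIV (fM M a)"
  unfolding fM_def[abs_def]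
  by (intro continuous_intros continuous_on_compose2[OF T_cont]) auto



definition Hf :: "(real \<Rightarrow> real) \<Rightarrow> real \<Rightarrow> real" where
  "Hf F u = integral {-4..u} F - integral {-4..-1} F"

definition cv :: "(real \<Rightarrow> real) \<Rightarrow> (real \<Rightarrow> real) \<Rightarrow> real \<Rightarrow> real" where
  "cv F g y = integral {-1..y} (\<lambda>t. F (y - 1 - t) * g t)"

lemma H_deriv:
  assumes F: "continuous_on UNIV F" and u: "-4 < u"
  shows "(Hf F has_real_derivative F u) (at u)"
proof -
  have "((\<lambda>x. integral {-4..x} F) has_real_derivative F u) (at u within {-4..u+1})"
    by (rule integral_has_real_derivative) (use F u in \<open>auto intro: continuous_on_subset\<close>)
  moreover have "at u within {-4..u+1} = at u"
    by (rule at_within_interior) (use u in auto)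
  ultimately have d: "((\<lambda>x. integral {-4..x} F) has_real_derivative F u) (at u)" by simp
  have e: "Hf F = (\<lambda>x. integral {-4..x} F - integral {-4..-1} F)"
    by (rule ext) (simp add: Hf_def)
  show ?thesis unfolding e using DERIV_diff[OF d DERIV_const] by simp
qed

lemma H_m1: "Hf F (-1) = 0" by (simp add: Hf_def)

lemma H_eq:
  assumes F: "continuous_on UNIV F" and y: "-1 \<le> y"
  shows "Hf F y = integral {-1..y} F"
proof -
  have "integral {-4..-1} F + integral {-1..y} F = integral {-4..y} F"
    by (rule Henstock_Kurzweil_Integration.integral_combine) (use y F in \<open>auto intro: integrable_continuous_interval continuous_on_subset\<close>)
  then show ?thesis by (simp add: Hf_def)
qed

lemma H_cont:
  assumes F: "continuous_on UNIV F"
  shows "continuous_on {-4<..} (Hf F)"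
  by (rule continuous_at_imp_continuous_on) (use H_deriv[OF F] DERIV_isCont in auto)

lemma cont_comp2:
  assumes "continuous_on T F" "continuous_on S h" "h ` S \<subseteq> T"
  shows "continuous_on S (\<lambda>z. F (h z))"
  using continuous_on_compose2[OF assms(1,2,3)] .

lemma cv_integrable:
  fixes F g :: "real \<Rightarrow> real"
  assumes F: "continuous_on UNIV F" and g: "continuous_on UNIV g"
  shows "(\<lambda>t. F (y - 1 - t) * g t) integrable_on {-1..y}"
  apply (rule integrable_continuous_interval)
  apply (intro continuous_intros)
  apply (rule cont_comp2[OF F])
  apply (auto intro!: continuous_intros)
  apply (rule continuous_on_subset[OF g])
  apply auto
  done

lemma conv_integral:
  assumes F: "continuous_on UNIV F" and g: "continuous_on UNIV g"
    and y: "-1 \<le> y" "y \<le> 1"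
  shows "integral {-1..y} (cv F g) = cv (Hf F) g y"
proof -
  define K where "K x t = Hf F (x - 1 - t) * g t" for x t
  define Kx where "Kx x t = F (x - 1 - t) * g t" for x t
  let ?I = "{-1..1::real}"
  have d: "((\<lambda>x. K x t) has_real_derivative Kx x t) (at x within ?I)"
    if "x \<in> ?I" "t \<in> ?I" for x t
  proof -
    have "((\<lambda>x. Hf F (x - 1 - t)) has_real_derivative F (x - 1 - t) * 1) (at x)"
      by (rule DERIV_chain2[OF H_deriv[OF F]]) (use that in \<open>auto intro!: derivative_eq_intros\<close>)
    then have "((\<lambda>x. Hf F (x - 1 - t) * g t) has_real_derivative F (x - 1 - t) * g t) (at x)"
      using DERIV_cmult_right by fastforce
    then show ?thesis unfolding K_def Kx_def by (rule has_field_derivative_at_within)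
  qed
  have cKx: "continuous_on (?I \<times> ?I) (\<lambda>(x,t). Kx x t)"
    unfolding Kx_def case_prod_beta
    by (intro continuous_intros cont_comp2[OF F] cont_comp2[OF g]) auto
  have cK: "continuous_on (?I \<times> ?I) (\<lambda>(x,t). K x t)"
    unfolding K_def case_prod_beta
    by (intro continuous_intros cont_comp2[OF H_cont[OF F]] cont_comp2[OF g]) auto
  have dd: "(cv (Hf F) g has_real_derivative cv F g s) (at s within {-1..y})" if s: "s \<in> {-1..y}" for s
  proof -
    have "s \<in> ?I" using s y by auto
    from var_leibniz[OF d cKx cK this]
    have "((\<lambda>y. integral {-1..y} (K y)) has_real_derivative integral {-1..s} (Kx s) + K s s) (at s within ?I)"
      by blast
    moreover have "(\<lambda>y. integral {-1..y} (K y)) = cv (Hf F) g"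
      by (rule ext) (simp add: cv_def K_def[abs_def])
    moreover have "integral {-1..s} (Kx s) + K s s = cv F g s"
      by (simp add: cv_def Kx_def[abs_def] K_def H_m1)
    ultimately have "(cv (Hf F) g has_real_derivative cv F g s) (at s within ?I)" by simp
    then show ?thesis by (rule DERIV_subset) (use y in auto)
  qed
  have "(cv F g has_integral cv (Hf F) g y - cv (Hf F) g (-1)) {-1..y}"
    by (rule fundamental_theorem_of_calculus)
       (use y dd in \<open>auto simp: has_real_derivative_iff_has_vector_derivative\<close>)
  moreover have "cv (Hf F) g (-1) = 0" by (simp add: cv_def)
  ultimately show ?thesis by (simp add: integral_unique)
qed

lemma conv_parts:
  assumes F: "continuous_on UNIV F" and g: "continuous_on UNIV g"
    and Q: "\<And>t. (Q has_real_derivative g t) (at t)"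
    and y: "-1 \<le> y" "y \<le> 1"
  shows "cv (Hf F) g y = cv F Q y - Hf F y * Q (-1)"
proof -
  have cQ: "continuous_on UNIV Q"
    by (rule continuous_at_imp_continuous_on) (use Q DERIV_isCont in blast)
  define P where "P t = Hf F (y - 1 - t) * Q t" for t
  have dP: "(P has_vector_derivative (Hf F (y - 1 - t) * g t - F (y - 1 - t) * Q t)) (at t within {-1..y})"
    if t: "t \<in> {-1..y}" for t
  proof -
    have "((\<lambda>t. Hf F (y - 1 - t)) has_real_derivative F (y - 1 - t) * (-1)) (at t)"
      by (rule DERIV_chain2[OF H_deriv[OF F]]) (use that in \<open>auto intro!: derivative_eq_intros\<close>)
    from DERIV_mult[OF this Q[of t]]
    have "(P has_real_derivative (Hf F (y - 1 - t) * g t - F (y - 1 - t) * Q t)) (at t)"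
      unfolding P_def[abs_def] by (simp add: algebra_simps)
    then show ?thesis
      by (simp add: has_real_derivative_iff_has_vector_derivative has_vector_derivative_at_within)
  qed
  have "((\<lambda>t. Hf F (y - 1 - t) * g t - F (y - 1 - t) * Q t) has_integral P y - P (-1)) {-1..y}"
    by (rule fundamental_theorem_of_calculus) (use y dP in auto)
  then have "integral {-1..y} (\<lambda>t. Hf F (y - 1 - t) * g t - F (y - 1 - t) * Q t) = - Hf F y * Q (-1)"
    by (simp add: integral_unique P_def H_m1)
  moreover have "integral {-1..y} (\<lambda>t. Hf F (y - 1 - t) * g t - F (y - 1 - t) * Q t)
      = cv (Hf F) g y - cv F Q y"
  proof -
    have i1: "(\<lambda>t. Hf F (y - 1 - t) * g t) integrable_on {-1..y}"
      by (intro integrable_continuous_interval continuous_intros cont_comp2[OF H_cont[OF F]]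
          continuous_on_subset[OF g]) auto
    have i2: "(\<lambda>t. F (y - 1 - t) * Q t) integrable_on {-1..y}"
      by (rule cv_integrable[OF F cQ])
    show ?thesis unfolding cv_def by (rule Henstock_Kurzweil_Integration.integral_diff[OF i1 i2])
  qed
  ultimately show ?thesis by simp
qed



lemma cv_lin:
  fixes F g1 g2 :: "real \<Rightarrow> real"
  assumes F: "continuous_on UNIV F" and g1: "continuous_on UNIV g1" and g2: "continuous_on UNIV g2"
  shows "cv F (\<lambda>t. c1 * g1 t + c2 * g2 t) y = c1 * cv F g1 y + c2 * cv F g2 y"
proof -
  have "cv F (\<lambda>t. c1 * g1 t + c2 * g2 t) y
      = integral {-1..y} (\<lambda>t. c1 * (F (y - 1 - t) * g1 t) + c2 * (F (y - 1 - t) * g2 t))"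
    unfolding cv_def by (simp add: algebra_simps)
  also have "\<dots> = integral {-1..y} (\<lambda>t. c1 * (F (y - 1 - t) * g1 t)) + integral {-1..y} (\<lambda>t. c2 * (F (y - 1 - t) * g2 t))"
    by (rule Henstock_Kurzweil_Integration.integral_add)
       (intro integrable_on_mult_right cv_integrable[OF F g1] cv_integrable[OF F g2])+
  also have "\<dots> = c1 * cv F g1 y + c2 * cv F g2 y"
    unfolding cv_def by simp
  finally show ?thesis .
qed

lemma alg_final0:
  fixes p q I A B C s :: real
  assumes p: "p \<noteq> 0" and q: "q \<noteq> 0" and qp: "q = p + 2"
    and E: "I = A / (2 * q) - B / (2 * p) - C * (- s / (2 * q) + s / (2 * p))"
  shows "A = 2 * q * I + q / p * B + 2 * s / p * C"
proof -
  have "2 * q * I = A - q / p * B + C * s - C * s * q / p"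
    unfolding E using p q by (simp add: field_simps)
  moreover have "C * s - C * s * q / p + 2 * s / p * C = 0"
    using p qp by (simp add: field_simps)
  ultimately show ?thesis by linarith
qed

lemma alg_final:
  fixes x I A B C s :: real
  assumes x: "x \<ge> 0"
    and E: "I = A / (2 * (x + 3)) - B / (2 * (x + 1)) - C * (- s / (2 * (x + 3)) + s / (2 * (x + 1)))"
  shows "A = 2 * (x + 3) * I + (x + 3) / (x + 1) * B + 2 * s / (x + 1) * C"
  by (rule alg_final0[OF _ _ _ E]) (use x in auto)

theorem theorem2p2:
  fixes M :: nat and a :: "nat \<Rightarrow> real" and y :: real
  assumes "-1 \<le> y" and "y \<le> 1"
  shows "Rt M a 0 y = integral {-1..y} (\<lambda>t. fM M a t)
       \<and> Rt M a 1 y = integral {-1..y} (\<lambda>s. Rt M a 0 s) - Rt M a 0 y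
       \<and> Rt M a 2 y = 4 * integral {-1..y} (\<lambda>s. Rt M a 1 s) + Rt M a 0 y
       \<and> (\<forall>n\<ge>2. Rt M a (n + 1) y =
           2 * real (n + 1) * integral {-1..y} (\<lambda>s. Rt M a n s)
           + (real (n + 1) / real (n - 1)) * Rt M a (n - 1) y
           + (2 * (-1) ^ n / real (n - 1)) * integral {-1..y} (\<lambda>t. fM M a t))"
proof -
  define F where "F = fM M a"
  have cF: "continuous_on UNIV F" unfolding F_def by (rule fM_cont)
  have RtE: "Rt M a n = cv F (cheb_T n)" for n
    by (rule ext) (simp add: Rt_def cv_def F_def)
  have intR: "integral {-1..y} (\<lambda>s. Rt M a n s) = cv (Hf F) (cheb_T n) y" for n
    unfolding RtE using conv_integral[OF cF T_cont assms] by simp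
  have fint: "integral {-1..y} (\<lambda>t. fM M a t) = Hf F y"
    using H_eq[OF cF assms(1)] by (simp add: F_def)
  have R0: "Rt M a 0 y = Hf F y"
  proof -
    have "cv (Hf F) (\<lambda>_. 0) y = cv F (\<lambda>_. 1) y - Hf F y * 1"
      by (rule conv_parts[OF cF _ _ assms]) auto
    moreover have "cv (Hf F) (\<lambda>_. 0) y = 0" by (simp add: cv_def)
    moreover have "cheb_T 0 = (\<lambda>_. 1)" by (rule ext) simp
    ultimately show ?thesis unfolding RtE by simp
  qed
  have p2: "Rt M a 1 y = integral {-1..y} (\<lambda>s. Rt M a 0 s) - Rt M a 0 y"
  proof -
    have d: "(cheb_T 1 has_real_derivative cheb_T 0 t) (at t)" for t
      using T_deriv[of 0 t] by simp
    have "cv (Hf F) (cheb_T 0) y = cv F (cheb_T 1) y - Hf F y * cheb_T 1 (-1)"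
      by (rule conv_parts[OF cF T_cont d assms])
    then show ?thesis unfolding intR R0 by (simp add: RtE)
  qed
  have p3: "Rt M a 2 y = 4 * integral {-1..y} (\<lambda>s. Rt M a 1 s) + Rt M a 0 y"
  proof -
    define Q where "Q t = (1/4) * cheb_T 2 t + 0 * cheb_T 2 t" for t
    have d: "(Q has_real_derivative cheb_T 1 t) (at t)" for t
    proof -
      have "(cheb_T 2 has_real_derivative 4 * t) (at t)"
        using T_deriv[of 1 t] by (simp add: numeral_2_eq_2)
      from DERIV_cmult[OF this, of "1/4"] show ?thesis
        unfolding Q_def[abs_def] by simp
    qed
    have "cv (Hf F) (cheb_T 1) y = cv F Q y - Hf F y * Q (-1)"
      by (rule conv_parts[OF cF T_cont d assms])
    moreover have "cv F Q y = (1/4) * cv F (cheb_T 2) y + 0 * cv F (cheb_T 2) y"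
      unfolding Q_def[abs_def] by (rule cv_lin[OF cF T_cont T_cont])
    moreover have "Q (-1) = 1/4" by (simp add: Q_def T_m1)
    ultimately show ?thesis unfolding intR R0 by (simp add: RtE)
  qed
  have p4: "Rt M a (n + 1) y =
           2 * real (n + 1) * integral {-1..y} (\<lambda>s. Rt M a n s)
           + (real (n + 1) / real (n - 1)) * Rt M a (n - 1) y
           + (2 * (-1) ^ n / real (n - 1)) * integral {-1..y} (\<lambda>t. fM M a t)"
    if "n \<ge> 2" for n
  proof -
    obtain k where n: "n = Suc (Suc k)" using \<open>n \<ge> 2\<close> by (metis add_2_eq_Suc le_Suc_ex)
    define c1 where "c1 = 1 / (2 * real (Suc (Suc (Suc k))))"
    define c2 where "c2 = - 1 / (2 * real (Suc k))"
    define Q where "Q t = c1 * cheb_T (Suc (Suc (Suc k))) t + c2 * cheb_T (Suc k) t" for t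
    have d: "(Q has_real_derivative cheb_T (Suc (Suc k)) t) (at t)" for t
    proof -
      have "(Q has_real_derivative c1 * (real (Suc (Suc (Suc k))) * cheb_U (Suc (Suc k)) t)
              + c2 * (real (Suc k) * cheb_U k t)) (at t)"
        unfolding Q_def[abs_def]
        by (intro DERIV_add DERIV_cmult T_deriv)
      moreover have "c1 * (real (Suc (Suc (Suc k))) * cheb_U (Suc (Suc k)) t)
              + c2 * (real (Suc k) * cheb_U k t) = cheb_T (Suc (Suc k)) t"
      proof -
        have u: "cheb_U (Suc (Suc k)) t = 2 * cheb_T (Suc (Suc k)) t + cheb_U k t"
          using UT[of k t] by linarith
        have e1: "c1 * real (Suc (Suc (Suc k))) = 1/2" unfolding c1_def
          by (simp del: of_nat_Suc)
        have e2: "c2 * real (Suc k) = - 1/2" unfolding c2_def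
          by (simp del: of_nat_Suc)
        have "c1 * (real (Suc (Suc (Suc k))) * cheb_U (Suc (Suc k)) t) + c2 * (real (Suc k) * cheb_U k t)
          = (c1 * real (Suc (Suc (Suc k)))) * cheb_U (Suc (Suc k)) t + (c2 * real (Suc k)) * cheb_U k t"
          by (simp only: mult.assoc)
        also have "\<dots> = cheb_T (Suc (Suc k)) t"
          unfolding e1 e2 u by (simp add: algebra_simps)
        finally show ?thesis .
      qed
      ultimately show ?thesis by simp
    qed
    have "cv (Hf F) (cheb_T (Suc (Suc k))) y = cv F Q y - Hf F y * Q (-1)"
      by (rule conv_parts[OF cF T_cont d assms])
    moreover have "cv F Q y = c1 * cv F (cheb_T (Suc (Suc (Suc k)))) y + c2 * cv F (cheb_T (Suc k)) y"
      unfolding Q_def[abs_def] by (rule cv_lin[OF cF T_cont T_cont])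
    moreover have "Q (-1) = c1 * (-1) ^ (Suc (Suc (Suc k))) + c2 * (-1) ^ Suc k"
      by (simp add: Q_def T_m1)
    ultimately have E: "integral {-1..y} (\<lambda>s. Rt M a n s)
        = c1 * Rt M a (n + 1) y + c2 * Rt M a (n - 1) y
          - Rt M a 0 y * (c1 * (-1) ^ (Suc (Suc (Suc k))) + c2 * (-1) ^ Suc k)"
      unfolding intR R0 n by (simp add: RtE)
    define s :: real where "s = (-1) ^ k"
    have s1: "(-1::real) ^ (Suc (Suc (Suc k))) = - s" "(-1::real) ^ Suc k = - s"
      "(-1::real) ^ n = s"
      by (simp_all add: s_def n)
    have r: "real (n + 1) = real k + 3" "real (n - 1) = real k + 1" using n by simp_all
    have E': "integral {-1..y} (\<lambda>s. Rt M a n s) = Rt M a (n + 1) y / (2 * (real k + 3))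
       - Rt M a (n - 1) y / (2 * (real k + 1)) - Rt M a 0 y * (- s / (2 * (real k + 3)) + s / (2 * (real k + 1)))"
      unfolding E s1 c1_def c2_def by (simp add: algebra_simps)
    have "Rt M a (n + 1) y = 2 * (real k + 3) * integral {-1..y} (\<lambda>s. Rt M a n s)
       + (real k + 3) / (real k + 1) * Rt M a (n - 1) y + 2 * s / (real k + 1) * Rt M a 0 y"
      by (rule alg_final[OF _ E']) simp
    then show ?thesis unfolding r s1 fint R0 by simp
  qed
  show ?thesis using R0 fint p2 p3 p4 by simp
qed

end
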